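(* Let $\Lambda\in\mathcal H$ be of integral type and $\tilde\Lambda\in\mathcal H$ of $\Lambda$-integral type. Consider ${}_{\tilde\Lambda}\mathcal V$ as a right module over the algebra $\mathcal V_{\tilde\Lambda}$ via $x\cdot a=S(\pi(a))x$. Then ${}_{\tilde\Lambda}\mathcal V$ is a cyclic $\mathcal V_{\tilde\Lambda}$-module if and only if $1_{\mathcal H}\in\mathcal V_{\tilde\Lambda}$ and $\mathcal V_{\tilde\Lambda}$ is a Frobenius algebra.
   Context: $k$ is a field; $\mathcal H$ is a Hopf algebra over $k$ with comultiplication $\Delta$, counit $\varepsilon$, invertible antipode $S$, dual $\mathcal H'$. For $\Lambda\in\mathcal H$ put $\mathcal V_\Lambda=\{(\nu\otimes\mathrm{id})\Delta(\Lambda):\nu\in\mathcal H'\}$ and ${}_\Lambda\mathcal V=\{(\mathrm{id}\otimes\nu)\Delta(\Lambda):\nu\in\mathcal H'\}$. A non-zero $\Lambda$ is of integral type if $\Delta(\Lambda)(1\otimes\Lambda)=\Lambda\otimes\Lambda$; for such $\Lambda$, a non-zero $\tilde\Lambda$ is of $\Lambda$-integral type if $\Delta(\tilde\Lambda)(1\otimes\tilde\Lambda)=\Lambda\otimes\tilde\Lambda$. $\mathcal A_{\tilde\Lambda}=\{a\in\mathcal H:\ \Delta(a)(1\otimes\tilde\Lambda)=b\otimes\tilde\Lambda\text{ for some }b\}$; $b$ is unique, denoted $\pi(a)$, and $\pi:\mathcal A_{\tilde\Lambda}\to\mathcal H$ is an injective algebra homomorphism; $\mathcal V_{\tilde\Lambda}$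 is a subalgebra of $\mathcal A_{\tilde\Lambda}$. A right module $M$ over an algebra $\mathcal B$ is cyclic if there is $m\in M$ with $m\mathcal B=M$. A finite-dimensional unital algebra $\mathcal B$ is Frobenius if it admits a non-degenerate bilinear form $\sigma$ with $\sigma(ab,c)=\sigma(a,bc)$ for all $a,b,c$ (equivalently, it admits a faithful functional $\omega$, i.e. $\omega(ab)=0$ for all $b$ implies $a=0$). *)

theory Defs
  imports Complex_Main
begin

text \<open>An element of H \<otimes> H is represented by a finite list of simple tensors
  [(x1,y1),...,(xn,yn)] standing for the sum of the xi \<otimes> yi; two such
  representatives denote the same tensor iff they agree under every bilinear form
  H \<times> H \<rightarrow> k (universal property of the tensor product, with target k, which
  separates points of H \<otimes> H over a field).  Similarly for H \<otimes> H \<otimes> H.\<close>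

definition bilinear_form :: "('k::field \<Rightarrow> 'h::ring_1 \<Rightarrow> 'h) \<Rightarrow> ('h \<Rightarrow> 'h \<Rightarrow> 'k) \<Rightarrow> bool" where
  "bilinear_form sc B \<longleftrightarrow>
     (\<forall>y. Vector_Spaces.linear sc (*) (\<lambda>x. B x y)) \<and> (\<forall>x. Vector_Spaces.linear sc (*) (B x))"

definition trilinear_form :: "('k::field \<Rightarrow> 'h::ring_1 \<Rightarrow> 'h) \<Rightarrow> ('h \<Rightarrow> 'h \<Rightarrow> 'h \<Rightarrow> 'k) \<Rightarrow> bool" where
  "trilinear_form sc T \<longleftrightarrow>
     (\<forall>y z. Vector_Spaces.linear sc (*) (\<lambda>x. T x y z)) \<and>
     (\<forall>x z. Vector_Spaces.linear sc (*) (\<lambda>y. T x y z)) \<and>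
     (\<forall>x y. Vector_Spaces.linear sc (*) (\<lambda>z. T x y z))"

definition tens_eq :: "('k::field \<Rightarrow> 'h::ring_1 \<Rightarrow> 'h) \<Rightarrow> ('h \<times> 'h) list \<Rightarrow> ('h \<times> 'h) list \<Rightarrow> bool" where
  "tens_eq sc t u \<longleftrightarrow>
     (\<forall>B. bilinear_form sc B \<longrightarrow> (\<Sum>(x,y)\<leftarrow>t. B x y) = (\<Sum>(x,y)\<leftarrow>u. B x y))"

definition tens3_eq :: "('k::field \<Rightarrow> 'h::ring_1 \<Rightarrow> 'h) \<Rightarrow> ('h \<times> 'h \<times> 'h) list \<Rightarrow> ('h \<times> 'h \<times> 'h) list \<Rightarrow> bool" where
  "tens3_eq sc t u \<longleftrightarrow>
     (\<forall>T. trilinear_form sc T \<longrightarrow> (\<Sum>(x,y,z)\<leftarrow>t. T x y z) = (\<Sum>(x,y,z)\<leftarrow>u. T x y z))"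

definition tens_mult :: "('h::ring_1 \<times> 'h) list \<Rightarrow> ('h \<times> 'h) list \<Rightarrow> ('h \<times> 'h) list" where
  "tens_mult t u = [(x * x', y * y'). (x, y) \<leftarrow> t, (x', y') \<leftarrow> u]"

definition slice_left :: "('k::field \<Rightarrow> 'h::ring_1 \<Rightarrow> 'h) \<Rightarrow> ('h \<Rightarrow> 'k) \<Rightarrow> ('h \<times> 'h) list \<Rightarrow> 'h" where
  "slice_left sc \<nu> t = (\<Sum>(x,y)\<leftarrow>t. sc (\<nu> x) y)"

definition slice_right :: "('k::field \<Rightarrow> 'h::ring_1 \<Rightarrow> 'h) \<Rightarrow> ('h \<Rightarrow> 'k) \<Rightarrow> ('h \<times> 'h) list \<Rightarrow> 'h" where
  "slice_right sc \<nu> t = (\<Sum>(x,y)\<leftarrow>t. sc (\<nu> y) x)"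

definition dual_space :: "('k::field \<Rightarrow> 'h::ring_1 \<Rightarrow> 'h) \<Rightarrow> ('h \<Rightarrow> 'k) set" where
  "dual_space sc = {\<nu>. Vector_Spaces.linear sc (*) \<nu>}"

locale hopf_algebra =
  fixes sc :: "'k::field \<Rightarrow> 'h::ring_1 \<Rightarrow> 'h"
    and D :: "'h \<Rightarrow> ('h \<times> 'h) list"
    and eps :: "'h \<Rightarrow> 'k"
    and S :: "'h \<Rightarrow> 'h"
  assumes vs: "vector_space sc"
    and alg_left: "\<And>c a b. sc c (a * b) = sc c a * b"
    and alg_right: "\<And>c a b. sc c (a * b) = a * sc c b"
    and D_add: "\<And>a b. tens_eq sc (D (a + b)) (D a @ D b)"
    and D_scale: "\<And>c a. tens_eq sc (D (sc c a)) (map (\<lambda>(x,y). (sc c x, y)) (D a))"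
    and D_mult: "\<And>a b. tens_eq sc (D (a * b)) (tens_mult (D a) (D b))"
    and D_one: "tens_eq sc (D 1) [(1, 1)]"
    and coassoc: "\<And>a. tens3_eq sc
        [(u, v, y). (x, y) \<leftarrow> D a, (u, v) \<leftarrow> D x]
        [(x, u, v). (x, y) \<leftarrow> D a, (u, v) \<leftarrow> D y]"
    and eps_linear: "Vector_Spaces.linear sc (*) eps"
    and counit_left: "\<And>a. (\<Sum>(x,y)\<leftarrow>D a. sc (eps x) y) = a"
    and counit_right: "\<And>a. (\<Sum>(x,y)\<leftarrow>D a. sc (eps y) x) = a"
    and eps_mult: "\<And>a b. eps (a * b) = eps a * eps b"
    and eps_one: "eps 1 = 1"
    and S_linear: "Vector_Spaces.linear sc sc S"
    and antipode_left: "\<And>a. (\<Sum>(x,y)\<leftarrow>D a. S x * y) = sc (eps a) 1"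
    and antipode_right: "\<And>a. (\<Sum>(x,y)\<leftarrow>D a. x * S y) = sc (eps a) 1"
    and S_invertible: "bij S"

definition integral_type :: "('k::field \<Rightarrow> 'h::ring_1 \<Rightarrow> 'h) \<Rightarrow> ('h \<Rightarrow> ('h \<times> 'h) list) \<Rightarrow> 'h \<Rightarrow> bool" where
  "integral_type sc D L \<longleftrightarrow> L \<noteq> 0 \<and> tens_eq sc (tens_mult (D L) [(1, L)]) [(L, L)]"

definition Lambda_integral_type ::
  "('k::field \<Rightarrow> 'h::ring_1 \<Rightarrow> 'h) \<Rightarrow> ('h \<Rightarrow> ('h \<times> 'h) list) \<Rightarrow> 'h \<Rightarrow> 'h \<Rightarrow> bool" where
  "Lambda_integral_type sc D L Lt \<longleftrightarrow> Lt \<noteq> 0 \<and> tens_eq sc (tens_mult (D Lt) [(1, Lt)]) [(L, Lt)]"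

definition A_set :: "('k::field \<Rightarrow> 'h::ring_1 \<Rightarrow> 'h) \<Rightarrow> ('h \<Rightarrow> ('h \<times> 'h) list) \<Rightarrow> 'h \<Rightarrow> 'h set" where
  "A_set sc D Lt = {a. \<exists>b. tens_eq sc (tens_mult (D a) [(1, Lt)]) [(b, Lt)]}"

definition hpi :: "('k::field \<Rightarrow> 'h::ring_1 \<Rightarrow> 'h) \<Rightarrow> ('h \<Rightarrow> ('h \<times> 'h) list) \<Rightarrow> 'h \<Rightarrow> 'h \<Rightarrow> 'h" where
  "hpi sc D Lt a = (THE b. tens_eq sc (tens_mult (D a) [(1, Lt)]) [(b, Lt)])"

text \<open>V_{Lt} = {(\<nu> \<otimes> id) D(Lt)} and _{Lt}V = {(id \<otimes> \<nu>) D(Lt)}.\<close>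
definition V_right :: "('k::field \<Rightarrow> 'h::ring_1 \<Rightarrow> 'h) \<Rightarrow> ('h \<Rightarrow> ('h \<times> 'h) list) \<Rightarrow> 'h \<Rightarrow> 'h set" where
  "V_right sc D Lt = {slice_left sc \<nu> (D Lt) | \<nu>. \<nu> \<in> dual_space sc}"

definition V_left :: "('k::field \<Rightarrow> 'h::ring_1 \<Rightarrow> 'h) \<Rightarrow> ('h \<Rightarrow> ('h \<times> 'h) list) \<Rightarrow> 'h \<Rightarrow> 'h set" where
  "V_left sc D Lt = {slice_right sc \<nu> (D Lt) | \<nu>. \<nu> \<in> dual_space sc}"

definition cyclic_module :: "'m set \<Rightarrow> 'b set \<Rightarrow> ('m \<Rightarrow> 'b \<Rightarrow> 'm) \<Rightarrow> bool" where
  "cyclic_module M B act \<longleftrightarrow> (\<exists>m \<in> M. {act m b | b. b \<in> B} = M)"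

definition frobenius :: "('k::field \<Rightarrow> 'h::ring_1 \<Rightarrow> 'h) \<Rightarrow> 'h set \<Rightarrow> bool" where
  "frobenius sc B \<longleftrightarrow>
     module.subspace sc B \<and> (\<forall>a\<in>B. \<forall>b\<in>B. a * b \<in> B) \<and>
     (\<exists>e\<in>B. \<forall>a\<in>B. e * a = a \<and> a * e = a) \<and>
     (\<exists>F. finite F \<and> F \<subseteq> B \<and> module.span sc F = B) \<and>
     (\<exists>\<sigma> :: 'h \<Rightarrow> 'h \<Rightarrow> 'k.
        (\<forall>x\<in>B. \<forall>y\<in>B. \<forall>z\<in>B. \<forall>c.
            \<sigma> (x + y) z = \<sigma> x z + \<sigma> y z \<and> \<sigma> (sc c x) z = c * \<sigma> x z \<and>
            \<sigma> x (y + z) = \<sigma> x y + \<sigma> x z \<and> \<sigma> x (sc c y) = c * \<sigma> x y) \<and>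
        (\<forall>a\<in>B. (\<forall>b\<in>B. \<sigma> a b = 0) \<longrightarrow> a = 0) \<and>
        (\<forall>b\<in>B. (\<forall>a\<in>B. \<sigma> a b = 0) \<longrightarrow> b = 0) \<and>
        (\<forall>a\<in>B. \<forall>b\<in>B. \<forall>c\<in>B. \<sigma> (a * b) c = \<sigma> a (b * c)))"

end

theory Submission
  imports Defs
begin

lemma vs_k: "vector_space ((*) :: 'k::field \<Rightarrow> 'k \<Rightarrow> 'k)"
  by unfold_locales (auto simp: algebra_simps)

context hopf_algebra begin

sublocale vs: vector_space sc by (rule vs)

sublocale vp: vector_space_pair sc "(*) :: 'k \<Rightarrow> 'k \<Rightarrow> 'k"
  by (intro vector_space_pair.intro vs vs_k)

sublocale vq: vector_space_pair sc sc
  by (intro vector_space_pair.intro vs)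

abbreviation lf :: "('h \<Rightarrow> 'k) \<Rightarrow> bool" where "lf \<nu> \<equiv> Vector_Spaces.linear sc (*) \<nu>"
abbreviation lh :: "('h \<Rightarrow> 'h) \<Rightarrow> bool" where "lh f \<equiv> Vector_Spaces.linear sc sc f"

lemma lf_iff: "lf \<nu> \<longleftrightarrow> (\<forall>x y. \<nu> (x+y) = \<nu> x + \<nu> y) \<and> (\<forall>c x. \<nu> (sc c x) = c * \<nu> x)"
  using Vector_Spaces.linear_iff[of sc "(*)" \<nu>] vs vs_k by auto

lemma lh_iff: "lh f \<longleftrightarrow> (\<forall>x y. f (x+y) = f x + f y) \<and> (\<forall>c x. f (sc c x) = sc c (f x))"
  using Vector_Spaces.linear_iff[of sc sc f] vs by auto

lemma lfI: "(\<And>x y. \<nu> (x+y) = \<nu> x + \<nu> y) \<Longrightarrow> (\<And>c x. \<nu> (sc c x) = c * \<nu> x) \<Longrightarrow> lf \<nu>"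
  by (simp add: lf_iff)
lemma lhI: "(\<And>x y. f (x+y) = f x + f y) \<Longrightarrow> (\<And>c x. f (sc c x) = sc c (f x)) \<Longrightarrow> lh f"
  by (simp add: lh_iff)

lemma lf_add: "lf \<nu> \<Longrightarrow> \<nu> (x+y) = \<nu> x + \<nu> y" by (simp add: lf_iff)
lemma lf_scale: "lf \<nu> \<Longrightarrow> \<nu> (sc c x) = c * \<nu> x" by (simp add: lf_iff)
lemma lf_zero: "lf \<nu> \<Longrightarrow> \<nu> 0 = 0" using lf_scale[of \<nu> 0 0] by simp
lemma lf_minus: "lf \<nu> \<Longrightarrow> \<nu> (-x) = - \<nu> x"
  using lf_add[of \<nu> x "-x"] lf_zero[of \<nu>] by (simp add: add_eq_0_iff2 add.commute)
lemma lf_diff: "lf \<nu> \<Longrightarrow> \<nu> (x - y) = \<nu> x - \<nu> y"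
  using lf_add[of \<nu> x "-y"] lf_minus[of \<nu> y] by simp
lemma lh_add: "lh f \<Longrightarrow> f (x+y) = f x + f y" by (simp add: lh_iff)
lemma lh_scale: "lh f \<Longrightarrow> f (sc c x) = sc c (f x)" by (simp add: lh_iff)

lemma S_add: "S (x+y) = S x + S y" using S_linear lh_add by blast
lemma S_scale: "S (sc c x) = sc c (S x)" using S_linear lh_scale by blast

lemma sc_mult_left: "sc c a * b = sc c (a * b)" by (simp add: alg_left)
lemma sc_mult_right: "a * sc c b = sc c (a * b)" by (simp add: alg_right)

lemmas sc_simps = vs.scale_right_distrib vs.scale_left_distrib vs.scale_scale vs.scale_one
  vs.scale_zero_left vs.scale_zero_right sc_mult_left sc_mult_right S_add S_scale

lemma lf_sum_list: "lf \<nu> \<Longrightarrow> \<nu> (sum_list (map g t)) = sum_list (map (\<lambda>p. \<nu> (g p)) t)"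
  by (induct t) (auto simp: lf_add lf_zero)
lemma lh_zero: "lh f \<Longrightarrow> f 0 = 0" using lh_scale[of f 0 0] by simp
lemma lh_sum_list: "lh f \<Longrightarrow> f (sum_list (map g t)) = sum_list (map (\<lambda>p. f (g p)) t)"
  by (induct t) (auto simp: lh_add lh_zero)

lemma bilinI: "(\<And>y. lf (\<lambda>x. \<beta> x y)) \<Longrightarrow> (\<And>x. lf (\<beta> x)) \<Longrightarrow> bilinear_form sc \<beta>"
  by (simp add: bilinear_form_def)
lemma bilinD1: "bilinear_form sc \<beta> \<Longrightarrow> lf (\<lambda>x. \<beta> x y)" by (simp add: bilinear_form_def)
lemma bilinD2: "bilinear_form sc \<beta> \<Longrightarrow> lf (\<beta> x)" by (simp add: bilinear_form_def)
lemma trilinI: "(\<And>y z. lf (\<lambda>x. T x y z)) \<Longrightarrow> (\<And>x z. lf (\<lambda>y. T x y z)) \<Longrightarrow> (\<And>x y. lf (\<lambda>z. T x y z)) \<Longrightarrow> trilinear_form sc T"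
  by (simp add: trilinear_form_def)

lemma tens_eqD: "tens_eq sc t u \<Longrightarrow> bilinear_form sc \<beta> \<Longrightarrow> (\<Sum>(x,y)\<leftarrow>t. \<beta> x y) = (\<Sum>(x,y)\<leftarrow>u. \<beta> x y)"
  by (simp add: tens_eq_def)

lemma Dsum_add: "bilinear_form sc \<beta> \<Longrightarrow> (\<Sum>(x,y)\<leftarrow>D (a+b). \<beta> x y) = (\<Sum>(x,y)\<leftarrow>D a. \<beta> x y) + (\<Sum>(x,y)\<leftarrow>D b. \<beta> x y)"
  using tens_eqD[OF D_add[of a b]] by simp

lemma Dsum_scale: assumes "bilinear_form sc \<beta>" shows "(\<Sum>(x,y)\<leftarrow>D (sc c a). \<beta> x y) = c * (\<Sum>(x,y)\<leftarrow>D a. \<beta> x y)"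
proof -
  have "(\<Sum>(x,y)\<leftarrow>D (sc c a). \<beta> x y) = (\<Sum>(x,y)\<leftarrow>map (\<lambda>(x,y). (sc c x, y)) (D a). \<beta> x y)"
    using tens_eqD[OF D_scale assms] by simp
  also have "\<dots> = (\<Sum>(x,y)\<leftarrow>D a. c * \<beta> x y)"
    by (simp add: o_def split_def lf_scale[OF bilinD1[OF assms]])
  also have "\<dots> = c * (\<Sum>(x,y)\<leftarrow>D a. \<beta> x y)"
    by (simp add: sum_list_const_mult[symmetric] split_def)
  finally show ?thesis .
qed

lemma Dsum_lf: "bilinear_form sc \<beta> \<Longrightarrow> lf (\<lambda>a. \<Sum>(x,y)\<leftarrow>D a. \<beta> x y)"
  by (intro lfI Dsum_add Dsum_scale)

lemma sum_list_concat': "sum_list (concat xss) = sum_list (map sum_list xss)"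
  by (induct xss) auto

lemma Dsum_mult: "bilinear_form sc \<beta> \<Longrightarrow> (\<Sum>(x,y)\<leftarrow>D (a*b). \<beta> x y) = (\<Sum>(x,y)\<leftarrow>D a. \<Sum>(x',y')\<leftarrow>D b. \<beta> (x*x') (y*y'))"
  using tens_eqD[OF D_mult[of a b]] by (simp add: tens_mult_def map_concat sum_list_concat' o_def split_def)

lemma coassocT: assumes "trilinear_form sc T"
  shows "(\<Sum>(x,y)\<leftarrow>D a. \<Sum>(u,v)\<leftarrow>D x. T u v y) = (\<Sum>(x,y)\<leftarrow>D a. \<Sum>(u,v)\<leftarrow>D y. T x u v)"
  using coassoc[of a] assms unfolding tens3_eq_def
  by (simp add: map_concat sum_list_concat' o_def split_def)

lemma sum_list_swap: "(\<Sum>p\<leftarrow>xs. \<Sum>q\<leftarrow>ys. f p q) = (\<Sum>q\<leftarrow>ys. \<Sum>p\<leftarrow>xs. (f p q :: 'a::comm_monoid_add))"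
  by (induct xs) (auto simp: sum_list_addf)

lemma bilin_simps:
  assumes "bilinear_form sc \<beta>"
  shows "\<beta> (x+y) z = \<beta> x z + \<beta> y z" "\<beta> x (y+z) = \<beta> x y + \<beta> x z"
    "\<beta> (sc c x) z = c * \<beta> x z" "\<beta> x (sc c z) = c * \<beta> x z"
  using assms unfolding bilinear_form_def lf_iff by blast+

lemma lf_sum_pairI: "(\<And>u v. lf (\<lambda>x. F u v x)) \<Longrightarrow> lf (\<lambda>x. \<Sum>(u,v)\<leftarrow>t. F u v x)"
proof (induct t)
  case Nil then show ?case by (simp add: lf_iff)
next
  case (Cons p t)
  obtain u v where p: "p = (u,v)" by (cases p)
  from Cons have "lf (F u v)" "lf (\<lambda>x. \<Sum>(u,v)\<leftarrow>t. F u v x)" by auto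
  then show ?case unfolding p lf_iff by (simp add: distrib_left)
qed

lemma lf_const_multI: "lf f \<Longrightarrow> lf (\<lambda>x. c * f x)" by (rule lfI) (simp_all add: lf_add lf_scale distrib_left)
lemma lf_mult_constI: "lf f \<Longrightarrow> lf (\<lambda>x. f x * c)" by (rule lfI) (simp_all add: lf_add lf_scale distrib_right)

lemma lf_exists: assumes "x \<noteq> 0" shows "\<exists>\<nu>. lf \<nu> \<and> \<nu> x = 1"
proof -
  have "vs.independent {x}" using assms by simp
  from vp.linear_independent_extend[OF this, of "\<lambda>_. 1"] show ?thesis by auto
qed

lemma separate: assumes "\<And>\<nu>. lf \<nu> \<Longrightarrow> \<nu> x = \<nu> y" shows "x = y"
proof (rule ccontr)
  assume "x \<noteq> y"
  then obtain \<nu> where "lf \<nu>" "\<nu> (x - y) = 1" using lf_exists[of "x - y"] by auto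
  with assms[of \<nu>] show False by (simp add: lf_diff)
qed

lemma dual_exists: assumes "vs.independent U" "u \<in> U"
  shows "\<exists>\<nu>. lf \<nu> \<and> (\<forall>w\<in>U. \<nu> w = (if w = u then 1 else 0))"
  using vp.linear_independent_extend[OF assms(1), of "\<lambda>w. if w = u then 1 else 0"] by auto

lemma lf_addI: "lf f \<Longrightarrow> lf g \<Longrightarrow> lf (\<lambda>x. f x + g x)"
  by (rule lfI) (simp_all add: lf_add lf_scale distrib_left)
lemma lf_diffI: "lf f \<Longrightarrow> lf g \<Longrightarrow> lf (\<lambda>x. f x - g x)"
  by (rule lfI) (simp_all add: lf_add lf_scale right_diff_distrib)
lemma lf_zeroI: "lf (\<lambda>x. 0)" by (rule lfI) simp_all

lemma lf_right_multI: "lf f \<Longrightarrow> lf (\<lambda>x. f (x * c))"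
  by (rule lfI) (simp_all add: lf_add lf_scale distrib_right sc_mult_left)
lemma lf_left_multI: "lf f \<Longrightarrow> lf (\<lambda>x. f (c * x))"
  by (rule lfI) (simp_all add: lf_add lf_scale distrib_left sc_mult_right)
lemma lf_SI: "lf f \<Longrightarrow> lf (\<lambda>x. f (S x))"
  by (rule lfI) (simp_all add: lf_add lf_scale S_add S_scale)

lemma lf_slice: "lf f \<Longrightarrow> f (\<Sum>(x,y)\<leftarrow>t. sc (g x y) y) = (\<Sum>(x,y)\<leftarrow>t. g x y * f y)"
  by (simp add: lf_sum_list split_def lf_scale)
lemma lf_slice': "lf f \<Longrightarrow> f (\<Sum>(x,y)\<leftarrow>t. sc (g x y) x) = (\<Sum>(x,y)\<leftarrow>t. g x y * f x)"
  by (simp add: lf_sum_list split_def lf_scale)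

lemma lf_sum_set: "lf f \<Longrightarrow> f (sum g A) = (\<Sum>a\<in>A. f (g a))"
proof (induct A rule: infinite_finite_induct)
  case (infinite A) then show ?case by (simp add: lf_zero)
next
  case empty then show ?case by (simp add: lf_zero)
next
  case (insert x F) then show ?case by (simp add: lf_add)
qed

lemma lh_sum_set: "lh f \<Longrightarrow> f (sum g A) = (\<Sum>a\<in>A. f (g a))"
proof (induct A rule: infinite_finite_induct)
  case (infinite A) then show ?case by (simp add: lh_zero)
next
  case empty then show ?case by (simp add: lh_zero)
next
  case (insert x F) then show ?case by (simp add: lh_add)
qed

lemma basis_fin:
  assumes "vs.subspace V" "V \<subseteq> vs.span T" "finite T"
  obtains U where "finite U" "U \<subseteq> V" "vs.independent U" "vs.span U = V"
proof -
  obtain U where U: "U \<subseteq> V" "vs.independent U" "V \<subseteq> vs.span U"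
    using vs.maximal_independent_subset[of V] by blast
  have "finite U" using vs.independent_span_bound[OF assms(3) U(2)] U(1) assms(2) by blast
  moreover have "vs.span U = V" using U assms(1) vs.span_minimal by blast
  ultimately show ?thesis using U that by blast
qed

definition is_dual :: "'h set \<Rightarrow> ('h \<Rightarrow> 'h \<Rightarrow> 'k) \<Rightarrow> bool" where
  "is_dual U \<delta> \<longleftrightarrow> (\<forall>u\<in>U. lf (\<delta> u) \<and> (\<forall>w\<in>U. \<delta> u w = (if w = u then 1 else 0)))"

lemma duals: assumes "vs.independent U" shows "\<exists>\<delta>. is_dual U \<delta>"
proof -
  have "\<forall>u\<in>U. \<exists>\<nu>. lf \<nu> \<and> (\<forall>w\<in>U. \<nu> w = (if w = u then 1 else 0))"
    using dual_exists[OF assms] by blast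
  then show ?thesis unfolding is_dual_def by (rule bchoice)
qed

lemma repr:
  assumes "finite U" "is_dual U \<delta>" "x \<in> vs.span U"
  shows "x = (\<Sum>u\<in>U. sc (\<delta> u x) u)"
proof -
  have l1: "lh (\<lambda>x. x)" by (rule lhI) simp_all
  have l2: "lh (\<lambda>x. \<Sum>u\<in>U. sc (\<delta> u x) u)"
  proof (rule lhI)
    fix x y show "(\<Sum>u\<in>U. sc (\<delta> u (x + y)) u) = (\<Sum>u\<in>U. sc (\<delta> u x) u) + (\<Sum>u\<in>U. sc (\<delta> u y) u)"
      using assms(2) by (simp add: is_dual_def lf_add vs.scale_left_distrib sum.distrib)
  next
    fix c x show "(\<Sum>u\<in>U. sc (\<delta> u (sc c x)) u) = sc c (\<Sum>u\<in>U. sc (\<delta> u x) u)"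
      using assms(2) by (simp add: is_dual_def lf_scale vs.scale_sum_right)
  qed
  have "w = (\<Sum>u\<in>U. sc (\<delta> u w) u)" if "w \<in> U" for w
  proof -
    have "(\<Sum>u\<in>U. sc (\<delta> u w) u) = (\<Sum>u\<in>U. if u = w then u else 0)"
      using assms(2) that by (intro sum.cong) (auto simp: is_dual_def)
    also have "\<dots> = w" using that assms(1) by (simp add: sum.delta)
    finally show ?thesis by simp
  qed
  then show ?thesis using vq.linear_eq_on[OF l1 l2 assms(3)] by blast
qed

lemma coeff:
  assumes "finite U" "is_dual U \<delta>" "w \<in> U"
  shows "\<delta> w (\<Sum>u\<in>U. sc (c u) u) = c w"
proof -
  have lw: "lf (\<delta> w)" using assms by (simp add: is_dual_def)
  have "\<delta> w (\<Sum>u\<in>U. sc (c u) u) = (\<Sum>u\<in>U. c u * \<delta> w u)" by (simp add: lf_sum_set[OF lw] lf_scale[OF lw])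
  also have "\<dots> = (\<Sum>u\<in>U. if u = w then c u else 0)"
    using assms by (intro sum.cong) (auto simp: is_dual_def)
  also have "\<dots> = c w" using assms by (simp add: sum.delta)
  finally show ?thesis .
qed

lemma card_span:
  assumes "finite U" "vs.independent U" "W \<subseteq> vs.span U" "vs.independent W" "finite W" "card W = card U"
  shows "vs.span U \<subseteq> vs.span W"
proof
  fix x assume x: "x \<in> vs.span U"
  show "x \<in> vs.span W"
  proof (rule ccontr)
    assume nx: "x \<notin> vs.span W"
    then have "vs.independent (insert x W)" using assms(4) vs.independent_insertI by blast
    moreover have "insert x W \<subseteq> vs.span U" using x assms(3) by blast
    ultimately have "card (insert x W) \<le> card U" using vs.independent_span_bound[OF assms(1)] by blast
    moreover have "x \<notin> W" using nx vs.span_base by blast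
    ultimately show False using assms(5,6) by simp
  qed
qed

lemma inj_surj:
  assumes fU: "finite U" and iU: "vs.independent U" and dU: "is_dual U \<delta>" and V: "vs.span U = V"
    and R: "lh R" and RV: "\<And>x. x \<in> V \<Longrightarrow> R x \<in> V" and inj: "\<And>x. x \<in> V \<Longrightarrow> R x = 0 \<Longrightarrow> x = 0"
  shows "V \<subseteq> R ` V"
proof -
  have sV: "vs.subspace V" using V by auto
  have UV: "U \<subseteq> V" using V vs.span_superset by blast
  have injU: "inj_on R U"
  proof (rule inj_onI)
    fix x y assume "x \<in> U" "y \<in> U" "R x = R y"
    then have "R (x - y) = 0" using vq.linear_diff[OF R] by simp
    moreover have "x - y \<in> V" using UV \<open>x \<in> U\<close> \<open>y \<in> U\<close> vs.subspace_diff[OF sV] by blast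
    ultimately have "x - y = 0" using inj by blast
    then show "x = y" by simp
  qed
  have indW: "vs.independent (R ` U)"
  proof (rule vs.independent_if_scalars_zero)
    show "finite (R ` U)" using fU by simp
  next
    fix f x assume h: "(\<Sum>x\<in>R ` U. sc (f x) x) = 0" and x: "x \<in> R ` U"
    then obtain w where w: "w \<in> U" "x = R w" by auto
    have "(\<Sum>x\<in>R ` U. sc (f x) x) = (\<Sum>u\<in>U. sc (f (R u)) (R u))" by (simp add: sum.reindex[OF injU])
    also have "\<dots> = R (\<Sum>u\<in>U. sc (f (R u)) u)" by (simp add: lh_sum_set[OF R] lh_scale[OF R])
    finally have "R (\<Sum>u\<in>U. sc (f (R u)) u) = 0" using h by simp
    moreover have "(\<Sum>u\<in>U. sc (f (R u)) u) \<in> V"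
      using UV by (intro vs.subspace_sum[OF sV] vs.subspace_scale[OF sV]) auto
    ultimately have "(\<Sum>u\<in>U. sc (f (R u)) u) = 0" using inj by blast
    then have "\<delta> w (\<Sum>u\<in>U. sc (f (R u)) u) = \<delta> w 0" by simp
    then show "f x = 0" using coeff[OF fU dU w(1)] dU w by (simp add: is_dual_def lf_zero)
  qed
  have "V \<subseteq> vs.span (R ` U)"
  proof -
    have "R ` U \<subseteq> vs.span U" using UV RV V by auto
    from card_span[OF fU iU this indW _ card_image[OF injU]] fU V show ?thesis by simp
  qed
  also have "\<dots> = R ` V" using vq.linear_span_image[OF R] V by simp
  finally show ?thesis .
qed

end

locale hopf_lt = hopf_algebra sc D eps S
  for sc :: "'k::field \<Rightarrow> 'h::ring_1 \<Rightarrow> 'h" and D eps S +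
  fixes L Lt :: 'h
  assumes lint: "Lambda_integral_type sc D L Lt"
begin

definition Psi where "Psi \<nu> = slice_left sc \<nu> (D Lt)"
definition Phi where "Phi \<phi> = slice_right sc \<phi> (D Lt)"
definition piL where "piL \<nu> = slice_left sc \<nu> (D L)"

lemma Lt_nz: "Lt \<noteq> 0" using lint by (simp add: Lambda_integral_type_def)

lemma int_rel: assumes "bilinear_form sc \<gamma>" shows "(\<Sum>(x,y)\<leftarrow>D Lt. \<gamma> x (y*Lt)) = \<gamma> L Lt"
proof -
  have "tens_eq sc (tens_mult (D Lt) [(1, Lt)]) [(L, Lt)]" using lint by (simp add: Lambda_integral_type_def)
  from tens_eqD[OF this assms] show ?thesis by (simp add: tens_mult_def split_def o_def)
qed

lemma Psi_app: "lf \<mu> \<Longrightarrow> \<mu> (Psi \<nu>) = (\<Sum>(x,y)\<leftarrow>D Lt. \<nu> x * \<mu> y)"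
  unfolding Psi_def slice_left_def by (rule lf_slice)
lemma piL_app: "lf \<mu> \<Longrightarrow> \<mu> (piL \<nu>) = (\<Sum>(x,y)\<leftarrow>D L. \<nu> x * \<mu> y)"
  unfolding piL_def slice_left_def by (rule lf_slice)
lemma Phi_app: "lf \<mu> \<Longrightarrow> \<mu> (Phi \<phi>) = (\<Sum>(x,y)\<leftarrow>D Lt. \<phi> y * \<mu> x)"
  unfolding Phi_def slice_right_def by (rule lf_slice')

lemma M1_eq: assumes nu: "lf \<nu>" shows "tens_eq sc (tens_mult (D (Psi \<nu>)) [(1, Lt)]) [(piL \<nu>, Lt)]"
  unfolding tens_eq_def
proof (intro allI impI)
  fix \<beta> assume b: "bilinear_form sc \<beta>"
  let ?F = "\<lambda>a. \<Sum>(u,v)\<leftarrow>D a. \<beta> u (v*Lt)"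
  have lfF: "lf ?F"
    by (intro Dsum_lf bilinI bilinD1[OF b] lf_right_multI bilinD2[OF b])
  have "(\<Sum>(x,y)\<leftarrow>tens_mult (D (Psi \<nu>)) [(1,Lt)]. \<beta> x y) = ?F (Psi \<nu>)"
    by (simp add: tens_mult_def split_def o_def)
  also have "\<dots> = (\<Sum>(x,y)\<leftarrow>D Lt. \<nu> x * ?F y)"
    unfolding Psi_def slice_left_def by (rule lf_slice[OF lfF])
  also have "\<dots> = (\<Sum>(x,y)\<leftarrow>D Lt. \<Sum>(u,v)\<leftarrow>D y. \<nu> x * \<beta> u (v*Lt))"
    by (simp add: sum_list_const_mult split_def)
  also have "\<dots> = (\<Sum>(x,y)\<leftarrow>D Lt. \<Sum>(u,v)\<leftarrow>D x. \<nu> u * \<beta> v (y*Lt))"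
  proof -
    have "trilinear_form sc (\<lambda>x u v. \<nu> x * \<beta> u (v*Lt))"
      by (intro trilinI lf_mult_constI lf_const_multI nu bilinD1[OF b] lf_right_multI bilinD2[OF b])
    from coassocT[OF this, of Lt] show ?thesis by simp
  qed
  also have "\<dots> = (\<lambda>x z. \<Sum>(u,v)\<leftarrow>D x. \<nu> u * \<beta> v z) L Lt"
    by (rule int_rel) (intro bilinI Dsum_lf lf_sum_pairI lf_const_multI lf_mult_constI nu bilinD1[OF b] bilinD2[OF b])
  also have "\<dots> = \<beta> (piL \<nu>) Lt"
    unfolding piL_def slice_left_def by (rule lf_slice[OF bilinD1[OF b], symmetric])
  finally show "(\<Sum>(x,y)\<leftarrow>tens_mult (D (Psi \<nu>)) [(1,Lt)]. \<beta> x y) = (\<Sum>(x,y)\<leftarrow>[(piL \<nu>, Lt)]. \<beta> x y)"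
    by simp
qed


lemma tens_eq_single_unique:
  assumes "tens_eq sc t [(b, Lt)]" "tens_eq sc t [(b', Lt)]" shows "b = b'"
proof -
  obtain g where g: "lf g" "g Lt = 1" using lf_exists[OF Lt_nz] by auto
  show ?thesis
  proof (rule separate)
    fix \<mu> assume mu: "lf \<mu>"
    have bl: "bilinear_form sc (\<lambda>x y. \<mu> x * g y)"
      by (intro bilinI lf_mult_constI lf_const_multI mu g(1))
    from tens_eqD[OF assms(1) bl] tens_eqD[OF assms(2) bl] g(2) show "\<mu> b = \<mu> b'" by simp
  qed
qed

lemma Psi_A: "lf \<nu> \<Longrightarrow> Psi \<nu> \<in> A_set sc D Lt"
  using M1_eq unfolding A_set_def by blast

lemma hpi_Psi: assumes "lf \<nu>" shows "hpi sc D Lt (Psi \<nu>) = piL \<nu>"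
  unfolding hpi_def
  by (rule the_equality) (auto intro: M1_eq[OF assms] tens_eq_single_unique[OF _ M1_eq[OF assms]])

lemma E_rel: assumes "trilinear_form sc T"
  shows "(\<Sum>(u,v)\<leftarrow>D L. T u v Lt) = (\<Sum>(x,y)\<leftarrow>D Lt. \<Sum>(u,v)\<leftarrow>D x. T u v (y*Lt))"
proof -
  have "bilinear_form sc (\<lambda>x z. \<Sum>(u,v)\<leftarrow>D x. T u v z)"
    using assms unfolding trilinear_form_def
    by (intro bilinI Dsum_lf lf_sum_pairI) auto
  from int_rel[OF this] show ?thesis by simp
qed


lemma KS: assumes nu: "lf \<nu>" and mu: "lf \<mu>" and ph: "lf \<phi>"
  shows "(\<Sum>(x,y)\<leftarrow>D Lt. \<mu> (S (piL \<nu>) * x) * \<phi> y) = (\<Sum>(x,y)\<leftarrow>D Lt. \<mu> x * \<phi> (Psi \<nu> * y))"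
proof -
  define R where "R = (\<lambda>s t v. \<Sum>(c,d)\<leftarrow>D Lt. \<mu> (S s * (t * c)) * \<phi> (v * d))"
  define \<tau> where "\<tau> = (\<lambda>v. \<Sum>(c,d)\<leftarrow>D Lt. \<mu> c * \<phi> (v * d))"
  have lf_muS: "lf (\<lambda>v. \<mu> (S v * x))" for x by (rule lf_SI[OF lf_right_multI[OF mu]])
  have lf_mul: "lf (\<lambda>a. \<mu> (w * (a * c)))" for w c
    by (rule lf_right_multI[of "\<lambda>z. \<mu> (w * z)" c, simplified], rule lf_left_multI[OF mu])
  have R_lin: "trilinear_form sc R"
    unfolding R_def
  proof (intro trilinI lf_sum_pairI lf_mult_constI lf_const_multI lf_right_multI[OF ph] lf_mul)
    fix t v c d show "lf (\<lambda>x. \<mu> (S x * (t * c)))" by (rule lf_SI[OF lf_right_multI[OF mu]])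
  qed
  have T1: "trilinear_form sc (\<lambda>u v w. \<nu> u * (\<Sum>(x,y)\<leftarrow>D w. \<mu> (S v * x) * \<phi> y))"
  proof (intro trilinI lf_mult_constI lf_const_multI nu lf_sum_pairI lf_muS Dsum_lf bilinI)
    fix x v y show "lf (\<lambda>xa. \<mu> (S v * xa))" by (rule lf_left_multI[OF mu])
  qed (rule ph)
  have T3: "trilinear_form sc (\<lambda>u v y. \<nu> u * (\<Sum>(a,b)\<leftarrow>D y. R v a b))"
    using R_lin[unfolded trilinear_form_def]
    by (intro trilinI lf_mult_constI lf_const_multI nu lf_sum_pairI Dsum_lf bilinI) auto
  have lf_tau: "lf \<tau>" unfolding \<tau>_def
    by (intro lf_sum_pairI lf_const_multI lf_right_multI[OF ph])
  have "(\<Sum>(x,y)\<leftarrow>D Lt. \<mu> (S (piL \<nu>) * x) * \<phi> y) = (\<Sum>(u,v)\<leftarrow>D L. \<nu> u * (\<Sum>(x,y)\<leftarrow>D Lt. \<mu> (S v * x) * \<phi> y))"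
  proof -
    have lfH: "lf (\<lambda>v. \<Sum>(x,y)\<leftarrow>D Lt. \<mu> (S v * x) * \<phi> y)"
      by (intro lf_sum_pairI lf_mult_constI lf_muS)
    show ?thesis using piL_app[OF lfH, of \<nu>] by simp
  qed
  also have "\<dots> = (\<Sum>(x,y)\<leftarrow>D Lt. \<Sum>(u,v)\<leftarrow>D x. \<nu> u * (\<Sum>(a,b)\<leftarrow>D (y*Lt). \<mu> (S v * a) * \<phi> b))"
    using E_rel[OF T1] by simp
  also have "\<dots> = (\<Sum>(x,y)\<leftarrow>D Lt. \<Sum>(u,v)\<leftarrow>D x. \<nu> u * (\<Sum>(a,b)\<leftarrow>D y. R v a b))"
  proof -
    have "(\<Sum>(a,b)\<leftarrow>D (y*Lt). \<mu> (S v * a) * \<phi> b) = (\<Sum>(a,b)\<leftarrow>D y. R v a b)" for y v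
    proof -
      have "bilinear_form sc (\<lambda>a b. \<mu> (S v * a) * \<phi> b)"
        by (intro bilinI lf_mult_constI lf_const_multI ph lf_left_multI[OF mu])
      from Dsum_mult[OF this, of y Lt] show ?thesis by (simp add: R_def mult.assoc)
    qed
    then show ?thesis by simp
  qed
  also have "\<dots> = (\<Sum>(x,y)\<leftarrow>D Lt. \<Sum>(u,v)\<leftarrow>D y. \<nu> x * (\<Sum>(a,b)\<leftarrow>D v. R u a b))"
    using coassocT[OF T3, of Lt] by simp
  also have "\<dots> = (\<Sum>(x,y)\<leftarrow>D Lt. \<nu> x * \<tau> y)"
  proof -
    have "(\<Sum>(u,v)\<leftarrow>D y. \<Sum>(a,b)\<leftarrow>D v. R u a b) = \<tau> y" for y
    proof -
      have "(\<Sum>(u,v)\<leftarrow>D y. \<Sum>(a,b)\<leftarrow>D v. R u a b) = (\<Sum>(u,v)\<leftarrow>D y. \<Sum>(s,t)\<leftarrow>D u. R s t v)"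
        using coassocT[OF R_lin, of y] by simp
      also have "\<dots> = (\<Sum>(u,v)\<leftarrow>D y. eps u * \<tau> v)"
      proof -
        have "(\<Sum>(s,t)\<leftarrow>D u. R s t v) = eps u * \<tau> v" for u v
        proof -
          define \<rho> where "\<rho> = (\<lambda>z. \<Sum>(c,d)\<leftarrow>D Lt. \<mu> (z * c) * \<phi> (v * d))"
          have lr: "lf \<rho>" unfolding \<rho>_def
            by (intro lf_sum_pairI lf_mult_constI lf_right_multI[OF mu])
          have "(\<Sum>(s,t)\<leftarrow>D u. R s t v) = (\<Sum>(s,t)\<leftarrow>D u. \<rho> (S s * t))"
            by (simp add: R_def \<rho>_def mult.assoc)
          also have "\<dots> = \<rho> (\<Sum>(s,t)\<leftarrow>D u. S s * t)"
            by (simp add: lf_sum_list[OF lr] split_def)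
          also have "\<dots> = \<rho> (sc (eps u) 1)" by (simp add: antipode_left)
          also have "\<dots> = eps u * \<rho> 1" by (rule lf_scale[OF lr])
          also have "\<dots> = eps u * \<tau> v" by (simp add: \<rho>_def \<tau>_def)
          finally show ?thesis .
        qed
        then show ?thesis by simp
      qed
      also have "\<dots> = \<tau> (\<Sum>(u,v)\<leftarrow>D y. sc (eps u) v)" by (rule lf_slice[OF lf_tau, symmetric])
      also have "\<dots> = \<tau> y" by (simp add: counit_left)
      finally show ?thesis .
    qed
    then show ?thesis by (simp add: sum_list_const_mult split_def)
  qed
  also have "\<dots> = (\<Sum>(c,d)\<leftarrow>D Lt. \<mu> c * \<phi> (Psi \<nu> * d))"
  proof -
    have e1: "(\<Sum>(x,y)\<leftarrow>D Lt. \<nu> x * \<tau> y) = (\<Sum>(x,y)\<leftarrow>D Lt. \<Sum>(c,d)\<leftarrow>D Lt. \<nu> x * (\<mu> c * \<phi> (y * d)))"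
      unfolding \<tau>_def by (simp only: split_def sum_list_const_mult)
    have e2: "(\<Sum>(x,y)\<leftarrow>D Lt. \<Sum>(c,d)\<leftarrow>D Lt. \<nu> x * (\<mu> c * \<phi> (y * d))) = (\<Sum>(c,d)\<leftarrow>D Lt. \<Sum>(x,y)\<leftarrow>D Lt. \<nu> x * (\<mu> c * \<phi> (y * d)))"
      unfolding split_def by (rule sum_list_swap)
    have e3: "(\<Sum>(c,d)\<leftarrow>D Lt. \<Sum>(x,y)\<leftarrow>D Lt. \<nu> x * (\<mu> c * \<phi> (y * d))) = (\<Sum>(c,d)\<leftarrow>D Lt. \<Sum>(x,y)\<leftarrow>D Lt. \<mu> c * (\<nu> x * \<phi> (y * d)))"
      by (simp only: mult.left_commute[of "\<nu> _"])
    have e0: "\<phi> (Psi \<nu> * d) = (\<Sum>(x,y)\<leftarrow>D Lt. \<nu> x * \<phi> (y * d))" for d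
      by (rule Psi_app) (rule lf_right_multI[OF ph])
    have e4: "(\<Sum>(c,d)\<leftarrow>D Lt. \<Sum>(x,y)\<leftarrow>D Lt. \<mu> c * (\<nu> x * \<phi> (y * d))) = (\<Sum>(c,d)\<leftarrow>D Lt. \<mu> c * \<phi> (Psi \<nu> * d))"
      by (simp only: e0 split_def sum_list_const_mult)
    show ?thesis using e1 e2 e3 e4 by simp
  qed
  finally show ?thesis .
qed


lemma M2: assumes nu: "lf \<nu>" and ph: "lf \<phi>"
  shows "S (piL \<nu>) * Phi \<phi> = Phi (\<lambda>b. \<phi> (Psi \<nu> * b))"
proof (rule separate)
  fix \<mu> assume mu: "lf \<mu>"
  have "\<mu> (S (piL \<nu>) * Phi \<phi>) = (\<Sum>(x,y)\<leftarrow>D Lt. \<phi> y * \<mu> (S (piL \<nu>) * x))"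
    by (rule Phi_app[OF lf_left_multI[OF mu]])
  also have "\<dots> = (\<Sum>(x,y)\<leftarrow>D Lt. \<mu> (S (piL \<nu>) * x) * \<phi> y)" by (simp add: mult.commute)
  also have "\<dots> = (\<Sum>(x,y)\<leftarrow>D Lt. \<mu> x * \<phi> (Psi \<nu> * y))" by (rule KS[OF nu mu ph])
  also have "\<dots> = (\<Sum>(x,y)\<leftarrow>D Lt. \<phi> (Psi \<nu> * y) * \<mu> x)" by (simp add: mult.commute)
  also have "\<dots> = \<mu> (Phi (\<lambda>b. \<phi> (Psi \<nu> * b)))" by (rule Phi_app[OF mu, symmetric])
  finally show "\<mu> (S (piL \<nu>) * Phi \<phi>) = \<mu> (Phi (\<lambda>b. \<phi> (Psi \<nu> * b)))" .
qed

lemma M5: assumes nu: "lf \<nu>" and nu': "lf \<nu>'"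
  shows "Psi \<nu> * Psi \<nu>' = Psi (\<lambda>x. \<nu>' (S (piL \<nu>) * x))"
proof (rule separate)
  fix \<phi> assume ph: "lf \<phi>"
  have "\<phi> (Psi \<nu> * Psi \<nu>') = (\<Sum>(x,y)\<leftarrow>D Lt. \<nu>' x * \<phi> (Psi \<nu> * y))"
    by (rule Psi_app[OF lf_left_multI[OF ph]])
  also have "\<dots> = (\<Sum>(x,y)\<leftarrow>D Lt. \<nu>' (S (piL \<nu>) * x) * \<phi> y)" by (rule KS[OF nu nu' ph, symmetric])
  also have "\<dots> = \<phi> (Psi (\<lambda>x. \<nu>' (S (piL \<nu>) * x)))" by (rule Psi_app[OF ph, symmetric])
  finally show "\<phi> (Psi \<nu> * Psi \<nu>') = \<phi> (Psi (\<lambda>x. \<nu>' (S (piL \<nu>) * x)))" .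
qed

lemma PhiPsi: assumes "lf \<mu>" "lf \<phi>" shows "\<mu> (Phi \<phi>) = \<phi> (Psi \<mu>)"
  by (simp add: Phi_app[OF assms(1)] Psi_app[OF assms(2)] mult.commute)

lemma Phi_eq_iff: assumes "lf \<phi>" "lf \<psi>"
  shows "Phi \<phi> = Phi \<psi> \<longleftrightarrow> (\<forall>\<nu>. lf \<nu> \<longrightarrow> \<phi> (Psi \<nu>) = \<psi> (Psi \<nu>))"
proof
  assume "Phi \<phi> = Phi \<psi>"
  then show "\<forall>\<nu>. lf \<nu> \<longrightarrow> \<phi> (Psi \<nu>) = \<psi> (Psi \<nu>)" using PhiPsi assms by metis
next
  assume h: "\<forall>\<nu>. lf \<nu> \<longrightarrow> \<phi> (Psi \<nu>) = \<psi> (Psi \<nu>)"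
  show "Phi \<phi> = Phi \<psi>"
    by (rule separate) (simp add: PhiPsi assms h)
qed

abbreviation "BB \<equiv> V_right sc D Lt"
abbreviation "MM \<equiv> V_left sc D Lt"

lemma BB_eq: "BB = {Psi \<nu> | \<nu>. lf \<nu>}"
  by (simp add: V_right_def Psi_def dual_space_def)
lemma MM_eq: "MM = {Phi \<phi> | \<phi>. lf \<phi>}"
  by (simp add: V_left_def Phi_def dual_space_def)

lemma Psi_add: "Psi \<nu> + Psi \<nu>' = Psi (\<lambda>x. \<nu> x + \<nu>' x)"
proof (rule separate)
  fix \<mu> assume mu: "lf \<mu>"
  have "\<mu> (Psi \<nu> + Psi \<nu>') = \<mu> (Psi \<nu>) + \<mu> (Psi \<nu>')" by (rule lf_add[OF mu])
  also have "\<dots> = (\<Sum>p\<leftarrow>D Lt. \<nu> (fst p) * \<mu> (snd p) + \<nu>' (fst p) * \<mu> (snd p))"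
    by (simp only: Psi_app[OF mu] split_def sum_list_addf)
  also have "\<dots> = \<mu> (Psi (\<lambda>x. \<nu> x + \<nu>' x))"
    by (simp only: Psi_app[OF mu] split_def distrib_right)
  finally show "\<mu> (Psi \<nu> + Psi \<nu>') = \<mu> (Psi (\<lambda>x. \<nu> x + \<nu>' x))" .
qed
lemma Psi_scale: "sc c (Psi \<nu>) = Psi (\<lambda>x. c * \<nu> x)"
proof (rule separate)
  fix \<mu> assume mu: "lf \<mu>"
  have "\<mu> (sc c (Psi \<nu>)) = c * \<mu> (Psi \<nu>)" by (rule lf_scale[OF mu])
  also have "\<dots> = (\<Sum>p\<leftarrow>D Lt. c * (\<nu> (fst p) * \<mu> (snd p)))"
    by (simp only: Psi_app[OF mu] split_def sum_list_const_mult)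
  also have "\<dots> = \<mu> (Psi (\<lambda>x. c * \<nu> x))"
    by (simp only: Psi_app[OF mu] split_def mult.assoc)
  finally show "\<mu> (sc c (Psi \<nu>)) = \<mu> (Psi (\<lambda>x. c * \<nu> x))" .
qed
lemma sum_list_zeros: "(\<Sum>p\<leftarrow>t. (0::'a::monoid_add)) = 0" by (induct t) auto
lemma Psi_zero: "Psi (\<lambda>x. 0) = 0"
  by (rule separate) (simp add: Psi_app lf_zero split_def sum_list_zeros)

lemma BB_subspace: "vs.subspace BB"
  unfolding vs.subspace_def BB_eq
proof (intro conjI ballI allI)
  show "0 \<in> {Psi \<nu> |\<nu>. lf \<nu>}" using Psi_zero lf_zeroI by (metis (mono_tags, lifting) mem_Collect_eq)
next
  fix x y assume "x \<in> {Psi \<nu> |\<nu>. lf \<nu>}" "y \<in> {Psi \<nu> |\<nu>. lf \<nu>}"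
  then obtain \<nu> \<nu>' where "x = Psi \<nu>" "lf \<nu>" "y = Psi \<nu>'" "lf \<nu>'" by auto
  then show "x + y \<in> {Psi \<nu> |\<nu>. lf \<nu>}" using Psi_add lf_addI by blast
next
  fix c x assume "x \<in> {Psi \<nu> |\<nu>. lf \<nu>}"
  then obtain \<nu> where "x = Psi \<nu>" "lf \<nu>" by auto
  then show "sc c x \<in> {Psi \<nu> |\<nu>. lf \<nu>}" using Psi_scale lf_const_multI by blast
qed

lemma BB_mult: "a \<in> BB \<Longrightarrow> b \<in> BB \<Longrightarrow> a * b \<in> BB"
  unfolding BB_eq using M5 lf_left_multI by blast

lemma span_sum_list: "(\<And>p. p \<in> set t \<Longrightarrow> g p \<in> vs.span X) \<Longrightarrow> sum_list (map g t) \<in> vs.span X"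
  by (induct t) (auto intro: vs.span_add vs.span_zero)

lemma BB_fin: "BB \<subseteq> vs.span (snd ` set (D Lt))"
proof
  fix x assume "x \<in> BB"
  then obtain \<nu> where "x = Psi \<nu>" by (auto simp: BB_eq)
  have "Psi \<nu> \<in> vs.span (snd ` set (D Lt))"
    unfolding Psi_def slice_left_def split_def
    by (rule span_sum_list, rule vs.span_scale, rule vs.span_base) auto
  then show "x \<in> vs.span (snd ` set (D Lt))" using \<open>x = Psi \<nu>\<close> by simp
qed

lemma sum_list_sum_swap: "(\<Sum>p\<leftarrow>t. \<Sum>u\<in>A. f p u) = (\<Sum>u\<in>A. \<Sum>p\<leftarrow>t. f p u)"
  by (induct t) (auto simp: sum.distrib)

lemma L1: "\<exists>U \<delta>. finite U \<and> (\<forall>u\<in>U. lf (\<delta> u)) \<and>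
   (\<forall>\<gamma>. bilinear_form sc \<gamma> \<longrightarrow> (\<Sum>(x,y)\<leftarrow>D Lt. \<gamma> x y) = (\<Sum>u\<in>U. \<gamma> u (Psi (\<delta> u))))"
proof -
  let ?P = "fst ` set (D Lt)"
  obtain U where U: "U \<subseteq> ?P" "vs.independent U" "?P \<subseteq> vs.span U"
    using vs.maximal_independent_subset[of ?P] by blast
  have fU: "finite U" using U(1) finite_subset by blast
  obtain \<delta> where d: "is_dual U \<delta>" using duals[OF U(2)] by blast
  have lfd: "\<forall>u\<in>U. lf (\<delta> u)" using d by (simp add: is_dual_def)
  have "(\<Sum>(x,y)\<leftarrow>D Lt. \<gamma> x y) = (\<Sum>u\<in>U. \<gamma> u (Psi (\<delta> u)))" if b: "bilinear_form sc \<gamma>" for \<gamma>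
  proof -
    have "(\<Sum>(x,y)\<leftarrow>D Lt. \<gamma> x y) = (\<Sum>p\<leftarrow>D Lt. \<Sum>u\<in>U. \<delta> u (fst p) * \<gamma> u (snd p))"
    proof -
      have "\<gamma> (fst p) (snd p) = (\<Sum>u\<in>U. \<delta> u (fst p) * \<gamma> u (snd p))" if "p \<in> set (D Lt)" for p
      proof -
        have "fst p \<in> vs.span U" using that U(3) by auto
        then have "fst p = (\<Sum>u\<in>U. sc (\<delta> u (fst p)) u)" by (rule repr[OF fU d])
        then have "\<gamma> (fst p) (snd p) = (\<lambda>x. \<gamma> x (snd p)) (\<Sum>u\<in>U. sc (\<delta> u (fst p)) u)" by simp
        also have "\<dots> = (\<Sum>u\<in>U. \<delta> u (fst p) * \<gamma> u (snd p))"
          by (simp add: lf_sum_set[OF bilinD1[OF b]] lf_scale[OF bilinD1[OF b]])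
        finally show ?thesis .
      qed
      then show ?thesis by (simp add: split_def cong: map_cong)
    qed
    also have "\<dots> = (\<Sum>u\<in>U. \<Sum>p\<leftarrow>D Lt. \<delta> u (fst p) * \<gamma> u (snd p))" by (rule sum_list_sum_swap)
    also have "\<dots> = (\<Sum>u\<in>U. \<gamma> u (Psi (\<delta> u)))"
      by (intro sum.cong refl) (simp add: Psi_app[OF bilinD2[OF b]] split_def)
    finally show ?thesis .
  qed
  then show ?thesis using fU lfd by blast
qed

lemma L1_unit: assumes b: "bilinear_form sc \<gamma>" and e: "\<And>b. b \<in> BB \<Longrightarrow> b * e = b"
  shows "(\<Sum>(x,y)\<leftarrow>D Lt. \<gamma> x (y * e)) = (\<Sum>(x,y)\<leftarrow>D Lt. \<gamma> x y)"
proof -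
  obtain U \<delta> where U: "finite U" "\<forall>u\<in>U. lf (\<delta> u)"
    and h: "\<And>\<gamma>. bilinear_form sc \<gamma> \<Longrightarrow> (\<Sum>(x,y)\<leftarrow>D Lt. \<gamma> x y) = (\<Sum>u\<in>U. \<gamma> u (Psi (\<delta> u)))"
    using L1 by blast
  have b': "bilinear_form sc (\<lambda>x y. \<gamma> x (y * e))"
    by (intro bilinI bilinD1[OF b] lf_right_multI[OF bilinD2[OF b]])
  have "(\<Sum>(x,y)\<leftarrow>D Lt. \<gamma> x (y * e)) = (\<Sum>u\<in>U. \<gamma> u (Psi (\<delta> u) * e))" using h[OF b'] by simp
  also have "\<dots> = (\<Sum>u\<in>U. \<gamma> u (Psi (\<delta> u)))"
  proof (intro sum.cong refl)
    fix u assume "u \<in> U"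
    then have "Psi (\<delta> u) \<in> BB" using U(2) by (auto simp: BB_eq)
    then show "\<gamma> u (Psi (\<delta> u) * e) = \<gamma> u (Psi (\<delta> u))" by (simp add: e)
  qed
  also have "\<dots> = (\<Sum>(x,y)\<leftarrow>D Lt. \<gamma> x y)" using h[OF b] by simp
  finally show ?thesis .
qed

lemma unit_one: assumes e: "\<And>b. b \<in> BB \<Longrightarrow> b * e = b" shows "e = 1"
proof (rule separate)
  fix \<mu> assume mu: "lf \<mu>"
  obtain g where g: "lf g" "g Lt = 1" using lf_exists[OF Lt_nz] by auto
  define Q where "Q = (\<lambda>z. \<Sum>(x,y)\<leftarrow>D Lt. \<Sum>(s,t)\<leftarrow>D y. g x * \<mu> (S s * t * z))"
  have Q1: "Q z = \<mu> z" for z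
  proof -
    have lz: "lf (\<lambda>w. \<mu> (w * z))" by (rule lf_right_multI[OF mu])
    have "Q z = (\<Sum>(x,y)\<leftarrow>D Lt. g x * \<mu> ((\<Sum>(s,t)\<leftarrow>D y. S s * t) * z))"
      unfolding Q_def by (simp only: lf_sum_list[OF lz] split_def sum_list_const_mult)
    also have "\<dots> = (\<Sum>(x,y)\<leftarrow>D Lt. g x * (eps y * \<mu> z))"
      by (simp only: antipode_left sc_mult_left lf_scale[OF mu] mult_1_left)
    also have "\<dots> = (\<Sum>(x,y)\<leftarrow>D Lt. eps y * g x * \<mu> z)"
      by (simp only: split_def mult.left_commute[of "g _"] mult.assoc)
    also have "\<dots> = (\<Sum>(x,y)\<leftarrow>D Lt. eps y * g x) * \<mu> z"
      by (simp only: split_def sum_list_mult_const)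
    also have "\<dots> = g (\<Sum>(x,y)\<leftarrow>D Lt. sc (eps y) x) * \<mu> z"
      by (simp add: lf_slice'[OF g(1)])
    also have "\<dots> = \<mu> z" by (simp add: counit_right g(2))
    finally show ?thesis .
  qed
  define \<gamma> where "\<gamma> = (\<lambda>x w. \<Sum>(u,v)\<leftarrow>D x. g u * \<mu> (S v * w))"
  have bg: "bilinear_form sc \<gamma>" unfolding \<gamma>_def
    by (intro bilinI Dsum_lf lf_sum_pairI lf_mult_constI lf_const_multI g(1) lf_SI[OF lf_right_multI[OF mu]] lf_left_multI[OF mu])
  have tri: "trilinear_form sc (\<lambda>x s t. g x * \<mu> (S s * t * z))" for z
  proof (intro trilinI lf_mult_constI lf_const_multI g(1) lf_SI lf_right_multI mu)
    fix x s
    have "lf (\<lambda>w. \<mu> (S s * w))" by (rule lf_left_multI[OF mu])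
    from lf_right_multI[OF this, of z] show "lf (\<lambda>t. \<mu> (S s * t * z))" by (simp add: mult.assoc)
  qed
  have Q2: "Q z = (\<Sum>(x,y)\<leftarrow>D Lt. \<gamma> x (y * z))" for z
    unfolding Q_def \<gamma>_def using coassocT[OF tri[of z], of Lt] by (simp add: mult.assoc)
  have "\<mu> e = (\<Sum>(x,y)\<leftarrow>D Lt. \<gamma> x (y * e))" using Q1[of e] Q2[of e] by simp
  also have "\<dots> = (\<Sum>(x,y)\<leftarrow>D Lt. \<gamma> x y)" by (rule L1_unit[OF bg e])
  also have "\<dots> = \<mu> 1" using Q1[of 1] Q2[of 1] by simp
  finally show "\<mu> e = \<mu> 1" .
qed

lemma act: "lf \<nu> \<Longrightarrow> lf \<phi> \<Longrightarrow> S (hpi sc D Lt (Psi \<nu>)) * Phi \<phi> = Phi (\<lambda>b. \<phi> (Psi \<nu> * b))"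
  by (simp add: hpi_Psi M2)

lemma BB_basis: "\<exists>U \<delta>. finite U \<and> U \<subseteq> BB \<and> vs.independent U \<and> vs.span U = BB \<and> is_dual U \<delta>"
proof -
  obtain U where "finite U" "U \<subseteq> BB" "vs.independent U" "vs.span U = BB"
    using basis_fin[OF BB_subspace BB_fin] by blast
  moreover obtain \<delta> where "is_dual U \<delta>" using duals[OF \<open>vs.independent U\<close>] by blast
  ultimately show ?thesis by blast
qed

lemma phi_comb:
  assumes ph: "lf \<phi>" and fU: "finite U" and dU: "is_dual U \<delta>" and w: "w \<in> U"
    and aeq: "\<forall>u\<in>U. \<phi> (a u * w) = \<delta> u w"
  shows "\<phi> ((\<Sum>u\<in>U. sc (c u) (a u)) * w) = c w"
proof -
  have "\<phi> ((\<Sum>u\<in>U. sc (c u) (a u)) * w) = (\<Sum>u\<in>U. c u * \<phi> (a u * w))"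
    by (simp add: sum_distrib_right sc_mult_left lf_sum_set[OF ph] lf_scale[OF ph])
  also have "\<dots> = (\<Sum>u\<in>U. if u = w then c u else 0)"
    using aeq dU w by (intro sum.cong refl) (auto simp: is_dual_def)
  also have "\<dots> = c w" using fU w by (simp add: sum.delta)
  finally show ?thesis .
qed

lemma dir1:
  assumes cyc: "cyclic_module MM BB (\<lambda>x a. S (hpi sc D Lt a) * x)"
  shows "1 \<in> BB \<and> frobenius sc BB"
proof -
  obtain U \<delta> where fU: "finite U" and UB: "U \<subseteq> BB" and iU: "vs.independent U"
    and sU: "vs.span U = BB" and dU: "is_dual U \<delta>"
    using BB_basis by blast
  from cyc obtain m where mM: "m \<in> MM" and meq: "{S (hpi sc D Lt a) * m | a. a \<in> BB} = MM"
    unfolding cyclic_module_def by blast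
  obtain \<phi>0 where ph0: "lf \<phi>0" and m: "m = Phi \<phi>0" using mM by (auto simp: MM_eq)
  have surj: "\<exists>a\<in>BB. \<forall>b\<in>BB. \<phi>0 (a * b) = \<psi> b" if psi: "lf \<psi>" for \<psi>
  proof -
    have "Phi \<psi> \<in> MM" using psi by (auto simp: MM_eq)
    then have "Phi \<psi> \<in> {S (hpi sc D Lt a) * m | a. a \<in> BB}" using meq by simp
    then obtain a where aB: "a \<in> BB" and ae: "S (hpi sc D Lt a) * m = Phi \<psi>" by auto
    obtain \<nu> where nu: "lf \<nu>" and a: "a = Psi \<nu>" using aB by (auto simp: BB_eq)
    have "Phi (\<lambda>b. \<phi>0 (Psi \<nu> * b)) = Phi \<psi>" using ae act[OF nu ph0] a m by simp
    then have "\<forall>\<nu>'. lf \<nu>' \<longrightarrow> \<phi>0 (Psi \<nu> * Psi \<nu>') = \<psi> (Psi \<nu>')"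
      using Phi_eq_iff[OF lf_left_multI[OF ph0] psi] by simp
    then show ?thesis using aB a by (auto simp: BB_eq)
  qed
  have "\<forall>u\<in>U. \<exists>x\<in>BB. \<forall>b\<in>BB. \<phi>0 (x * b) = \<delta> u b"
    using surj dU by (auto simp: is_dual_def)
  then obtain a where aB: "\<forall>u\<in>U. a u \<in> BB" and aeq: "\<forall>u\<in>U. \<forall>b\<in>BB. \<phi>0 (a u * b) = \<delta> u b"
    by metis
  have aeqw: "\<forall>u\<in>U. \<phi>0 (a u * w) = \<delta> u w" if "w \<in> U" for w using aeq that UB by blast
  have injA: "inj_on a U"
  proof (rule inj_onI)
    fix u u' assume u: "u \<in> U" "u' \<in> U" "a u = a u'"
    have "\<delta> u u = \<delta> u' u" using aeq u UB by (metis subsetD)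
    then show "u = u'" using dU u by (auto simp: is_dual_def split: if_splits)
  qed
  have indA: "vs.independent (a ` U)"
  proof (rule vs.independent_if_scalars_zero)
    show "finite (a ` U)" using fU by simp
  next
    fix f x assume h: "(\<Sum>x\<in>a ` U. sc (f x) x) = 0" and x: "x \<in> a ` U"
    then obtain w where w: "w \<in> U" "x = a w" by auto
    have "(\<Sum>u\<in>U. sc (f (a u)) (a u)) = 0" using h by (simp add: sum.reindex[OF injA])
    then have "\<phi>0 ((\<Sum>u\<in>U. sc (f (a u)) (a u)) * w) = 0" by (simp add: lf_zero[OF ph0])
    then show "f x = 0" using phi_comb[OF ph0 fU dU w(1) aeqw[OF w(1)], of "\<lambda>u. f (a u)"] w by simp
  qed
  have BA: "BB \<subseteq> vs.span (a ` U)"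
  proof -
    have "a ` U \<subseteq> vs.span U" using aB sU by auto
    from card_span[OF fU iU this indA _ card_image[OF injA]] fU sU show ?thesis by simp
  qed
  have faith: "y = 0" if y: "y \<in> BB" and h: "\<forall>b\<in>BB. \<phi>0 (y * b) = 0" for y
  proof -
    have "y \<in> vs.span (a ` U)" using y BA by blast
    then obtain c where "y = (\<Sum>x\<in>a ` U. sc (c x) x)" using vs.span_finite[of "a ` U"] fU by auto
    then have yc: "y = (\<Sum>u\<in>U. sc (c (a u)) (a u))" by (simp add: sum.reindex[OF injA])
    have "c (a w) = 0" if w: "w \<in> U" for w
      using phi_comb[OF ph0 fU dU w aeqw[OF w], of "\<lambda>u. c (a u)"] h w UB yc by auto
    then show ?thesis using yc by simp
  qed
  obtain e where eB: "e \<in> BB" and eq: "\<forall>b\<in>BB. \<phi>0 (e * b) = \<phi>0 b" using surj[OF ph0] by blast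
  have sB: "vs.subspace BB" by (rule BB_subspace)
  have eleft: "e * x = x" if x: "x \<in> BB" for x
  proof -
    have "e * x - x = 0"
    proof (rule faith)
      show "e * x - x \<in> BB" using BB_mult[OF eB x] x vs.subspace_diff[OF sB] by blast
      show "\<forall>b\<in>BB. \<phi>0 ((e * x - x) * b) = 0"
        using eq BB_mult[OF x] by (simp add: left_diff_distrib lf_diff[OF ph0] mult.assoc)
    qed
    then show ?thesis by simp
  qed
  have eright: "x * e = x" if x: "x \<in> BB" for x
  proof -
    have "x * e - x = 0"
    proof (rule faith)
      show "x * e - x \<in> BB" using BB_mult[OF x eB] x vs.subspace_diff[OF sB] by blast
      show "\<forall>b\<in>BB. \<phi>0 ((x * e - x) * b) = 0"
        using eleft by (simp add: left_diff_distrib lf_diff[OF ph0] mult.assoc lf_zero[OF ph0])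
    qed
    then show ?thesis by simp
  qed
  have e1: "e = 1" using unit_one eright by blast
  have one: "1 \<in> BB" using eB e1 by simp
  have frob: "frobenius sc BB"
    unfolding frobenius_def
  proof (intro conjI ballI)
    show "vs.subspace BB" by (rule sB)
    show "\<And>a b. a \<in> BB \<Longrightarrow> b \<in> BB \<Longrightarrow> a * b \<in> BB" by (rule BB_mult)
    show "\<exists>e\<in>BB. \<forall>a\<in>BB. e * a = a \<and> a * e = a" by (rule bexI[OF _ one]) simp
    show "\<exists>F. finite F \<and> F \<subseteq> BB \<and> vs.span F = BB" using fU UB sU by blast
    show "\<exists>\<sigma>. (\<forall>x\<in>BB. \<forall>y\<in>BB. \<forall>z\<in>BB. \<forall>c. \<sigma> (x + y) z = \<sigma> x z + \<sigma> y z \<and> \<sigma> (sc c x) z = c * \<sigma> x z \<and>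
            \<sigma> x (y + z) = \<sigma> x y + \<sigma> x z \<and> \<sigma> x (sc c y) = c * \<sigma> x y) \<and>
        (\<forall>a\<in>BB. (\<forall>b\<in>BB. \<sigma> a b = 0) \<longrightarrow> a = 0) \<and>
        (\<forall>b\<in>BB. (\<forall>a\<in>BB. \<sigma> a b = 0) \<longrightarrow> b = 0) \<and>
        (\<forall>a\<in>BB. \<forall>b\<in>BB. \<forall>c\<in>BB. \<sigma> (a * b) c = \<sigma> a (b * c))"
    proof (intro exI[of _ "\<lambda>a b. \<phi>0 (a * b)"] conjI ballI allI impI)
      fix x y z c
      show "\<phi>0 ((x + y) * z) = \<phi>0 (x * z) + \<phi>0 (y * z)" by (simp add: distrib_right lf_add[OF ph0])
      show "\<phi>0 (sc c x * z) = c * \<phi>0 (x * z)" by (simp add: sc_mult_left lf_scale[OF ph0])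
      show "\<phi>0 (x * (y + z)) = \<phi>0 (x * y) + \<phi>0 (x * z)" by (simp add: distrib_left lf_add[OF ph0])
      show "\<phi>0 (x * sc c y) = c * \<phi>0 (x * y)" by (simp add: sc_mult_right lf_scale[OF ph0])
    next
      fix a assume "a \<in> BB" "\<forall>b\<in>BB. \<phi>0 (a * b) = 0" then show "a = 0" by (rule faith)
    next
      fix b assume b: "b \<in> BB" and h: "\<forall>a\<in>BB. \<phi>0 (a * b) = 0"
      have "b = (\<Sum>u\<in>U. sc (\<delta> u b) u)" using repr[OF fU dU] b sU by blast
      also have "\<dots> = (\<Sum>u\<in>U. sc 0 u)" using aeq aB h b by (intro sum.cong refl) (metis)
      finally show "b = 0" by simp
    next
      fix a b c show "\<phi>0 (a * b * c) = \<phi>0 (a * (b * c))" by (simp add: mult.assoc)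
    qed
  qed
  show ?thesis using one frob by blast
qed

lemma sig_sum1:
  assumes sig: "\<forall>x\<in>V. \<forall>y\<in>V. \<forall>z\<in>V. \<forall>c. \<sigma> (x + y) z = \<sigma> x z + \<sigma> y z \<and> \<sigma> (sc c x) z = c * \<sigma> x z \<and>
            \<sigma> x (y + z) = \<sigma> x y + \<sigma> x z \<and> \<sigma> x (sc c y) = c * \<sigma> x y"
    and sV: "vs.subspace V" and z: "z \<in> V"
  shows "(\<forall>u\<in>A. g u \<in> V) \<Longrightarrow> \<sigma> (\<Sum>u\<in>A. sc (c u) (g u)) z = (\<Sum>u\<in>A. c u * \<sigma> (g u) z)"
proof (induct A rule: infinite_finite_induct)
  have z0: "\<sigma> 0 z = 0"
    using sig vs.subspace_0[OF sV] z by (metis mult_zero_left vs.scale_zero_left)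
  { case (infinite A) then show ?case using z0 by simp }
  { case empty then show ?case using z0 by simp }
next
  case (insert x F)
  have "(\<Sum>u\<in>F. sc (c u) (g u)) \<in> V" using insert.prems
    by (intro vs.subspace_sum[OF sV] vs.subspace_scale[OF sV]) auto
  moreover have "g x \<in> V" using insert.prems by auto
  ultimately show ?case using insert sig z vs.subspace_scale[OF sV] by simp
qed

lemma sig_sum2:
  assumes sig: "\<forall>x\<in>V. \<forall>y\<in>V. \<forall>z\<in>V. \<forall>c. \<sigma> (x + y) z = \<sigma> x z + \<sigma> y z \<and> \<sigma> (sc c x) z = c * \<sigma> x z \<and>
            \<sigma> x (y + z) = \<sigma> x y + \<sigma> x z \<and> \<sigma> x (sc c y) = c * \<sigma> x y"
    and sV: "vs.subspace V" and z: "z \<in> V"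
  shows "(\<forall>u\<in>A. g u \<in> V) \<Longrightarrow> \<sigma> z (\<Sum>u\<in>A. sc (c u) (g u)) = (\<Sum>u\<in>A. c u * \<sigma> z (g u))"
proof (induct A rule: infinite_finite_induct)
  have z0: "\<sigma> z 0 = 0"
    using sig vs.subspace_0[OF sV] z by (metis mult_zero_left vs.scale_zero_left)
  { case (infinite A) then show ?case using z0 by simp }
  { case empty then show ?case using z0 by simp }
next
  case (insert x F)
  have "(\<Sum>u\<in>F. sc (c u) (g u)) \<in> V" using insert.prems
    by (intro vs.subspace_sum[OF sV] vs.subspace_scale[OF sV]) auto
  moreover have "g x \<in> V" using insert.prems by auto
  ultimately show ?case using insert sig z vs.subspace_scale[OF sV] by simp
qed

lemma dir2:
  assumes one: "1 \<in> BB" and fr: "frobenius sc BB"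
  shows "cyclic_module MM BB (\<lambda>x a. S (hpi sc D Lt a) * x)"
proof -
  obtain U \<delta> where fU: "finite U" and UB: "U \<subseteq> BB" and iU: "vs.independent U"
    and sU: "vs.span U = BB" and dU: "is_dual U \<delta>"
    using BB_basis by blast
  have sB: "vs.subspace BB" by (rule BB_subspace)
  from fr obtain \<sigma> where sig: "\<forall>x\<in>BB. \<forall>y\<in>BB. \<forall>z\<in>BB. \<forall>c. \<sigma> (x + y) z = \<sigma> x z + \<sigma> y z \<and> \<sigma> (sc c x) z = c * \<sigma> x z \<and>
            \<sigma> x (y + z) = \<sigma> x y + \<sigma> x z \<and> \<sigma> x (sc c y) = c * \<sigma> x y"
    and nd1: "\<forall>a\<in>BB. (\<forall>b\<in>BB. \<sigma> a b = 0) \<longrightarrow> a = 0"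
    and assoc: "\<forall>a\<in>BB. \<forall>b\<in>BB. \<forall>c\<in>BB. \<sigma> (a * b) c = \<sigma> a (b * c)"
    unfolding frobenius_def by blast
  have lfd: "lf (\<delta> u)" if "u \<in> U" for u using dU that by (simp add: is_dual_def)
  have rep: "b = (\<Sum>u\<in>U. sc (\<delta> u b) u)" if "b \<in> BB" for b using repr[OF fU dU] that sU by blast
  define \<chi> where "\<chi> = (\<lambda>z x. \<Sum>u\<in>U. \<sigma> u z * \<delta> u x)"
  have lchi: "lf (\<chi> z)" for z
  proof (rule lfI)
    fix x y
    have "\<chi> z (x + y) = (\<Sum>u\<in>U. \<sigma> u z * \<delta> u x + \<sigma> u z * \<delta> u y)"
      unfolding \<chi>_def by (intro sum.cong refl) (simp add: lf_add[OF lfd] distrib_left)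
    then show "\<chi> z (x + y) = \<chi> z x + \<chi> z y" by (simp add: sum.distrib \<chi>_def)
  next
    fix c x
    have "\<chi> z (sc c x) = (\<Sum>u\<in>U. c * (\<sigma> u z * \<delta> u x))"
      unfolding \<chi>_def by (intro sum.cong refl) (simp add: lf_scale[OF lfd] mult.left_commute)
    then show "\<chi> z (sc c x) = c * \<chi> z x" by (simp add: sum_distrib_left \<chi>_def)
  qed
  have chi_ag: "\<chi> z x = \<sigma> x z" if x: "x \<in> BB" and z: "z \<in> BB" for x z
  proof -
    have "\<sigma> x z = \<sigma> (\<Sum>u\<in>U. sc (\<delta> u x) u) z" using rep[OF x] by simp
    also have "\<dots> = (\<Sum>u\<in>U. \<delta> u x * \<sigma> u z)"
      using sig_sum1[OF sig sB z, of U "\<lambda>u. u" "\<lambda>u. \<delta> u x"] UB by auto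
    finally show ?thesis by (simp add: \<chi>_def mult.commute)
  qed
  define R where "R = (\<lambda>x. \<Sum>u\<in>U. sc (\<chi> u x) u)"
  have lR: "lh R"
  proof (rule lhI)
    fix x y show "R (x + y) = R x + R y"
      by (simp add: R_def lf_add[OF lchi] vs.scale_left_distrib sum.distrib)
  next
    fix c x show "R (sc c x) = sc c (R x)"
      by (simp add: R_def lf_scale[OF lchi] vs.scale_sum_right)
  qed
  have RV: "R x \<in> BB" if "x \<in> BB" for x
    unfolding R_def using UB by (intro vs.subspace_sum[OF sB] vs.subspace_scale[OF sB]) auto
  have coefR: "\<delta> w (R x) = \<chi> w x" if "w \<in> U" for w x
    unfolding R_def by (rule coeff[OF fU dU that])
  have sig_rep: "\<sigma> a b = (\<Sum>u\<in>U. \<delta> u b * \<sigma> a u)" if a: "a \<in> BB" and b: "b \<in> BB" for a b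
  proof -
    have "\<sigma> a b = \<sigma> a (\<Sum>u\<in>U. sc (\<delta> u b) u)" using rep[OF b] by simp
    also have "\<dots> = (\<Sum>u\<in>U. \<delta> u b * \<sigma> a u)"
      using sig_sum2[OF sig sB a, of U "\<lambda>u. u" "\<lambda>u. \<delta> u b"] UB by auto
    finally show ?thesis .
  qed
  have inj: "x = 0" if x: "x \<in> BB" and Rx: "R x = 0" for x
  proof -
    have "\<sigma> x w = 0" if w: "w \<in> U" for w
    proof -
      have "\<chi> w x = 0" using coefR[OF w, of x] Rx lf_zero[OF lfd[OF w]] by simp
      then show ?thesis using chi_ag[OF x] w UB by auto
    qed
    then have "\<forall>b\<in>BB. \<sigma> x b = 0" using sig_rep[OF x] by simp
    then show ?thesis using nd1 x by blast
  qed
  have surjR: "BB \<subseteq> R ` BB" by (rule inj_surj[OF fU iU dU sU lR RV inj])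
  define \<phi>0 where "\<phi>0 = \<chi> 1"
  have ph0: "lf \<phi>0" unfolding \<phi>0_def by (rule lchi)
  have key: "\<exists>a\<in>BB. \<forall>b\<in>BB. \<phi>0 (a * b) = \<psi> b" if psi: "lf \<psi>" for \<psi>
  proof -
    define t where "t = (\<Sum>u\<in>U. sc (\<psi> u) u)"
    have "t \<in> BB" unfolding t_def using UB by (intro vs.subspace_sum[OF sB] vs.subspace_scale[OF sB]) auto
    then obtain a where a: "a \<in> BB" "R a = t" using surjR by blast
    have aw: "\<sigma> a w = \<psi> w" if w: "w \<in> U" for w
    proof -
      have "\<chi> w a = \<delta> w t" using coefR[OF w, of a] a by simp
      also have "\<dots> = \<psi> w" unfolding t_def by (rule coeff[OF fU dU w])
      finally show ?thesis using chi_ag[OF a(1)] w UB by auto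
    qed
    have ab: "\<sigma> a b = \<psi> b" if b: "b \<in> BB" for b
    proof -
      have "\<sigma> a b = (\<Sum>u\<in>U. \<delta> u b * \<psi> u)" using sig_rep[OF a(1) b] aw by simp
      also have "\<dots> = \<psi> (\<Sum>u\<in>U. sc (\<delta> u b) u)" by (simp add: lf_sum_set[OF psi] lf_scale[OF psi])
      also have "\<dots> = \<psi> b" using rep[OF b] by simp
      finally show ?thesis .
    qed
    have "\<phi>0 (a * b) = \<psi> b" if b: "b \<in> BB" for b
    proof -
      have "\<phi>0 (a * b) = \<sigma> (a * b) 1" unfolding \<phi>0_def by (rule chi_ag[OF BB_mult[OF a(1) b] one])
      also have "\<dots> = \<sigma> a (b * 1)" using assoc a(1) b one by blast
      also have "\<dots> = \<psi> b" using ab[OF b] by simp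
      finally show ?thesis .
    qed
    then show ?thesis using a(1) by blast
  qed
  have mM: "Phi \<phi>0 \<in> MM" using ph0 by (auto simp: MM_eq)
  have "{S (hpi sc D Lt a) * Phi \<phi>0 | a. a \<in> BB} = MM"
  proof
    show "{S (hpi sc D Lt a) * Phi \<phi>0 | a. a \<in> BB} \<subseteq> MM"
    proof
      fix x assume "x \<in> {S (hpi sc D Lt a) * Phi \<phi>0 | a. a \<in> BB}"
      then obtain a where "a \<in> BB" "x = S (hpi sc D Lt a) * Phi \<phi>0" by auto
      then obtain \<nu> where nu: "lf \<nu>" and x: "x = S (hpi sc D Lt (Psi \<nu>)) * Phi \<phi>0" by (auto simp: BB_eq)
      have "x = Phi (\<lambda>b. \<phi>0 (Psi \<nu> * b))" using act[OF nu ph0] x by simp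
      then show "x \<in> MM" using lf_left_multI[OF ph0] by (auto simp: MM_eq)
    qed
  next
    show "MM \<subseteq> {S (hpi sc D Lt a) * Phi \<phi>0 | a. a \<in> BB}"
    proof
      fix x assume "x \<in> MM"
      then obtain \<psi> where psi: "lf \<psi>" and x: "x = Phi \<psi>" by (auto simp: MM_eq)
      obtain a where aB: "a \<in> BB" and ha: "\<forall>b\<in>BB. \<phi>0 (a * b) = \<psi> b" using key[OF psi] by blast
      obtain \<nu> where nu: "lf \<nu>" and a: "a = Psi \<nu>" using aB by (auto simp: BB_eq)
      have "\<forall>\<nu>'. lf \<nu>' \<longrightarrow> \<phi>0 (Psi \<nu> * Psi \<nu>') = \<psi> (Psi \<nu>')"
        using ha a by (auto simp: BB_eq)
      then have "Phi (\<lambda>b. \<phi>0 (Psi \<nu> * b)) = Phi \<psi>"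
        using Phi_eq_iff[OF lf_left_multI[OF ph0] psi] by simp
      then have "x = S (hpi sc D Lt a) * Phi \<phi>0" using act[OF nu ph0] a x by simp
      then show "x \<in> {S (hpi sc D Lt a) * Phi \<phi>0 | a. a \<in> BB}" using aB by blast
    qed
  qed
  then show ?thesis unfolding cyclic_module_def using mM by blast
qed

theorem main_lt: "cyclic_module MM BB (\<lambda>x a. S (hpi sc D Lt a) * x) \<longleftrightarrow> 1 \<in> BB \<and> frobenius sc BB"
  using dir1 dir2 by blast

end
theorem mainTheorem5:
  fixes sc :: "'k::field \<Rightarrow> 'h::ring_1 \<Rightarrow> 'h"
    and D :: "'h \<Rightarrow> ('h \<times> 'h) list"
    and eps :: "'h \<Rightarrow> 'k"
    and S :: "'h \<Rightarrow> 'h"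
    and L Lt :: 'h
  assumes "hopf_algebra sc D eps S"
    and "integral_type sc D L"
    and "Lambda_integral_type sc D L Lt"
  shows "cyclic_module (V_left sc D Lt) (V_right sc D Lt) (\<lambda>x a. S (hpi sc D Lt a) * x)
     \<longleftrightarrow> 1 \<in> V_right sc D Lt \<and> frobenius sc (V_right sc D Lt)"
proof -
  interpret hopf_lt sc D eps S L Lt
    using assms(1,3) by (simp add: hopf_lt_def hopf_lt_axioms_def)
  show ?thesis by (rule main_lt)
qed

end
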